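(* Let $T:X\to Y$ be a bijective linear operator between Archimedean vector lattices, and assume that $X$ has sufficiently many components. Then $T$ is disjointness preserving if and only if $T^{-1}$ satisfies condition $(\beta)$.
   Context: All vector lattices are Archimedean. For a subset $A$ of a vector lattice $X$, $A^d=\{x\in X: |x|\wedge|a|=0 \text{ for all } a\in A\}$ and $A^{dd}=(A^d)^d$. For $a,b\in X$ we write $a\lhd b$ if $\{a\}^{dd}\subseteq\{b\}^{dd}$. A linear operator $S$ satisfies condition $(\beta)$ if $Sa\lhd Sb$ whenever $a\lhd b$. A linear operator is disjointness preserving if it maps disjoint elements to disjoint elements. An element $x'$ is a component of $x$ if $|x'|\wedge|x-x'|=0$. A vector lattice $X$ has sufficiently many components if whenever $x,u\in X$ with $x\notin\{u\}^{dd}$, there exists a nonzero component $x'$ of $x$ with $|x'|\wedge|u|=0$. *)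

theory Defs
  imports Main "HOL.Real_Vector_Spaces"
begin

text \<open>A (real) vector lattice is modelled as a type of class
  ordered_real_vector that is also a lattice (same order).\<close>

definition vabs :: "'a::{ordered_real_vector, lattice} \<Rightarrow> 'a" where
  "vabs x = sup x (- x)"

definition archimedean_vl :: "'a::{ordered_real_vector, lattice} itself \<Rightarrow> bool" where
  "archimedean_vl _ \<longleftrightarrow>
     (\<forall>x y :: 'a. 0 \<le> x \<and> (\<forall>n::nat. real n *\<^sub>R x \<le> y) \<longrightarrow> x = 0)"

definition vdisj :: "'a::{ordered_real_vector, lattice} \<Rightarrow> 'a \<Rightarrow> bool" where
  "vdisj x y \<longleftrightarrow> inf (vabs x) (vabs y) = 0"

definition dcompl :: "'a::{ordered_real_vector, lattice} set \<Rightarrow> 'a set" where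
  "dcompl A = {x. \<forall>a\<in>A. vdisj x a}"

definition ddband :: "'a::{ordered_real_vector, lattice} \<Rightarrow> 'a set" where
  "ddband a = dcompl (dcompl {a})"

definition vlhd :: "'a::{ordered_real_vector, lattice} \<Rightarrow> 'a \<Rightarrow> bool" where
  "vlhd a b \<longleftrightarrow> ddband a \<subseteq> ddband b"

definition cond_beta ::
  "('a::{ordered_real_vector, lattice} \<Rightarrow> 'b::{ordered_real_vector, lattice}) \<Rightarrow> bool" where
  "cond_beta S \<longleftrightarrow> (\<forall>a b. vlhd a b \<longrightarrow> vlhd (S a) (S b))"

definition disj_preserving ::
  "('a::{ordered_real_vector, lattice} \<Rightarrow> 'b::{ordered_real_vector, lattice}) \<Rightarrow> bool" where
  "disj_preserving T \<longleftrightarrow> (\<forall>x y. vdisj x y \<longrightarrow> vdisj (T x) (T y))"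

definition vcomponent :: "'a::{ordered_real_vector, lattice} \<Rightarrow> 'a \<Rightarrow> bool" where
  "vcomponent x' x \<longleftrightarrow> vdisj x' (x - x')"

definition suff_many_components :: "'a::{ordered_real_vector, lattice} itself \<Rightarrow> bool" where
  "suff_many_components _ \<longleftrightarrow>
     (\<forall>x u :: 'a. x \<notin> ddband u \<longrightarrow>
        (\<exists>x'. vcomponent x' x \<and> x' \<noteq> 0 \<and> vdisj x' u))"

end

theory Submission
  imports Defs
begin

lemma my_add_inf: "(a::'a::{ordered_real_vector, lattice}) + inf b c = inf (a + b) (a + c)"
proof (intro order.antisym)
  show "inf (a + b) (a + c) \<le> a + inf b c"
    by (metis add.commute diff_le_eq inf_greatest inf_le1 inf_le2)
qed simp

lemma vabs_nonneg: "0 \<le> vabs (x::'a::{ordered_real_vector, lattice})"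
proof -
  have "x \<le> vabs x" "- x \<le> vabs x" by (auto simp: vabs_def)
  then have "x + - x \<le> vabs x + vabs x" by (rule add_mono)
  then have "0 \<le> (2::real) *\<^sub>R vabs x" by (simp add: scaleR_2)
  then have "0 \<le> (1/2::real) *\<^sub>R ((2::real) *\<^sub>R vabs x)" by (rule scaleR_nonneg_nonneg[rotated]) simp
  moreover have "(1/2::real) *\<^sub>R ((2::real) *\<^sub>R vabs x) = vabs x" by simp
  ultimately show ?thesis by simp
qed

lemma vabs_pos: "0 \<le> (x::'a::{ordered_real_vector, lattice}) \<Longrightarrow> vabs x = x"
  unfolding vabs_def by (rule sup_absorb1) (meson neg_le_0_iff_le order_trans)

lemma vabs_zero: "vabs (x::'a::{ordered_real_vector, lattice}) = 0 \<Longrightarrow> x = 0"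
  unfolding vabs_def by (metis neg_le_0_iff_le order.antisym sup.cobounded1 sup.cobounded2)

lemma vabs_tri: "vabs ((x::'a::{ordered_real_vector, lattice}) + y) \<le> vabs x + vabs y"
proof -
  have "x \<le> vabs x" "- x \<le> vabs x" "y \<le> vabs y" "- y \<le> vabs y" by (auto simp: vabs_def)
  then have "x + y \<le> vabs x + vabs y" "(-x) + (- y) \<le> vabs x + vabs y"
    by (metis add_mono)+
  then have "x + y \<le> vabs x + vabs y" "-(x + y) \<le> vabs x + vabs y" by (metis minus_add_distrib add.commute)+
  then show ?thesis unfolding vabs_def by simp
qed

lemma vabs_minus: "vabs (- (x::'a::{ordered_real_vector, lattice})) = vabs x"
  unfolding vabs_def by (simp add: sup_commute)

lemma riesz:
  fixes A U V :: "'a::{ordered_real_vector, lattice}"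
  assumes "0 \<le> A" "0 \<le> U" "0 \<le> V"
  shows "inf A (U + V) \<le> inf A U + inf A V"
proof -
  define t where "t = inf A (U + V)"
  have t0: "0 \<le> t" using assms by (simp add: t_def add_nonneg_nonneg)
  have tA: "t \<le> A" by (simp add: t_def)
  have "t \<le> V + inf t U"
  proof -
    have "t \<le> V + t" using assms by simp
    moreover have "t \<le> V + U" using t_def by (simp add: add.commute le_infI2)
    ultimately have "t \<le> inf (V + t) (V + U)" by simp
    then show ?thesis by (simp add: my_add_inf)
  qed
  then have h1: "t - inf t U \<le> V" by (simp add: diff_le_eq add.commute)
  have "0 \<le> inf t U" using t0 assms by simp
  then have "t - inf t U \<le> t" by simp
  then have "t - inf t U \<le> A" using tA by (rule order.trans)
  with h1 have "t - inf t U \<le> inf A V" by simp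
  then have "t \<le> inf t U + inf A V" by (metis diff_le_eq add.commute)
  also have "\<dots> \<le> inf A U + inf A V" using tA by (simp add: add_right_mono le_infI1)
  finally show ?thesis by (simp add: t_def)
qed

lemma vdisj_sym: "vdisj x y \<Longrightarrow> vdisj y x"
  unfolding vdisj_def by (simp add: inf_commute)

lemma vdisj_self: "vdisj (x::'a::{ordered_real_vector, lattice}) x \<Longrightarrow> x = 0"
  unfolding vdisj_def by (simp add: vabs_zero)

lemma lemC:
  fixes p q :: "'a::{ordered_real_vector, lattice}"
  assumes "vdisj p q" "vdisj p (p + q)"
  shows "p = 0"
proof -
  have "vabs p = vabs ((p + q) + - q)" by simp
  also have "\<dots> \<le> vabs (p + q) + vabs q" using vabs_tri[of "p+q" "-q"] by (simp add: vabs_minus)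
  finally have le: "vabs p \<le> vabs (p + q) + vabs q" .
  have "vabs p = inf (vabs p) (vabs (p + q) + vabs q)" using le by (simp add: inf_absorb1)
  also have "\<dots> \<le> inf (vabs p) (vabs (p + q)) + inf (vabs p) (vabs q)"
    by (rule riesz) (auto simp: vabs_nonneg)
  also have "\<dots> = 0" using assms by (simp add: vdisj_def)
  finally have "vabs p \<le> 0" .
  then have "vabs p = 0" using vabs_nonneg order.antisym by blast
  then show ?thesis by (rule vabs_zero)
qed

lemma dcompl_anti: "A \<subseteq> B \<Longrightarrow> dcompl B \<subseteq> dcompl A"
  unfolding dcompl_def by auto

lemma self_ddband: "a \<in> ddband a"
  unfolding ddband_def dcompl_def by (auto intro: vdisj_sym)

lemma ddband_sub: "x \<in> ddband u \<Longrightarrow> ddband x \<subseteq> ddband u"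
  unfolding ddband_def
  apply (rule dcompl_anti)
  unfolding dcompl_def by (auto intro: vdisj_sym)

lemma lemA:
  fixes w a :: "'a::{ordered_real_vector, lattice}"
  assumes "0 \<le> w" "w \<le> vabs a"
  shows "vlhd w a"
proof -
  have "dcompl {a} \<subseteq> dcompl {w}"
  proof
    fix v assume "v \<in> dcompl {a}"
    then have "inf (vabs v) (vabs a) = 0" by (simp add: dcompl_def vdisj_def)
    moreover have "inf (vabs v) w \<le> inf (vabs v) (vabs a)" using assms by (simp add: le_infI2)
    moreover have "0 \<le> inf (vabs v) w" using assms vabs_nonneg by simp
    ultimately have "inf (vabs v) (vabs w) = 0" using assms vabs_pos by (metis order.antisym)
    then show "v \<in> dcompl {w}" by (simp add: dcompl_def vdisj_def)
  qed
  then show ?thesis unfolding vlhd_def ddband_def by (rule dcompl_anti)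
qed

lemma lemB:
  assumes "vlhd z x" "vlhd z y" "vdisj x y"
  shows "z = (0::'a::{ordered_real_vector, lattice})"
proof -
  have zx: "z \<in> ddband x" and zy: "z \<in> ddband y" using assms self_ddband unfolding vlhd_def by blast+
  have "y \<in> dcompl {x}" using assms(3) by (simp add: dcompl_def vdisj_sym)
  then have "vdisj z y" using zx unfolding ddband_def dcompl_def by blast
  then have "z \<in> dcompl {y}" by (simp add: dcompl_def)
  then have "vdisj z z" using zy unfolding ddband_def dcompl_def by blast
  then show ?thesis by (rule vdisj_self)
qed

theorem theorem3p4:
  fixes T :: "'a::{ordered_real_vector, lattice} \<Rightarrow> 'b::{ordered_real_vector, lattice}"
  assumes "archimedean_vl TYPE('a)" and "archimedean_vl TYPE('b)"
    and "linear T" and "bij T"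
    and "suff_many_components TYPE('a)"
  shows "disj_preserving T \<longleftrightarrow> cond_beta (inv T)"
proof
  have invT: "\<And>y. T (inv T y) = y" using assms(4) by (simp add: bij_is_surj surj_f_inv_f)
  have Tinv: "\<And>x. inv T (T x) = x" using assms(4) by (simp add: bij_is_inj)
  have T0: "T 0 = 0" using assms(3) by (simp add: linear_0)
  assume dp: "disj_preserving T"
  show "cond_beta (inv T)"
    unfolding cond_beta_def
  proof (intro allI impI)
    fix a b :: 'b assume ab: "vlhd a b"
    define x where "x = inv T a"
    define u where "u = inv T b"
    have "x \<in> ddband u"
    proof (rule ccontr)
      assume "x \<notin> ddband u"
      then obtain x' where c: "vcomponent x' x" "x' \<noteq> 0" "vdisj x' u"
        using assms(5) unfolding suff_many_components_def by blast
      have d1: "vdisj (T x') b" using dp c(3) unfolding disj_preserving_def u_def by (metis invT)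
      have d2: "vdisj (T x') (T (x - x'))" using dp c(1) unfolding disj_preserving_def vcomponent_def by blast
      have "T x' \<in> dcompl {b}" using d1 by (simp add: dcompl_def)
      moreover have "a \<in> ddband b" using ab self_ddband unfolding vlhd_def by blast
      ultimately have "vdisj a (T x')" unfolding ddband_def dcompl_def by blast
      then have "vdisj (T x') a" by (rule vdisj_sym)
      moreover have "a = T x' + T (x - x')" using assms(3) invT by (simp add: x_def linear_diff)
      ultimately have "T x' = 0" using d2 lemC by metis
      then have "x' = 0" using T0 Tinv by metis
      with c(2) show False by simp
    qed
    then show "vlhd (inv T a) (inv T b)" unfolding vlhd_def x_def u_def by (rule ddband_sub[unfolded x_def u_def])
  qed
next
  have invT: "\<And>y. T (inv T y) = y" using assms(4) by (simp add: bij_is_surj surj_f_inv_f)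
  have Tinv: "\<And>x. inv T (T x) = x" using assms(4) by (simp add: bij_is_inj)
  have T0: "T 0 = 0" using assms(3) by (simp add: linear_0)
  assume cb: "cond_beta (inv T)"
  show "disj_preserving T"
    unfolding disj_preserving_def
  proof (intro allI impI)
    fix x y :: 'a assume xy: "vdisj x y"
    define w where "w = inf (vabs (T x)) (vabs (T y))"
    have w0: "0 \<le> w" by (simp add: w_def vabs_nonneg)
    have "vlhd w (T x)" by (rule lemA[OF w0]) (simp add: w_def)
    then have "vlhd (inv T w) x" using cb Tinv unfolding cond_beta_def by metis
    moreover have "vlhd w (T y)" by (rule lemA[OF w0]) (simp add: w_def)
    then have "vlhd (inv T w) y" using cb Tinv unfolding cond_beta_def by metis
    ultimately have "inv T w = 0" using xy lemB by blast
    then have "w = 0" using invT T0 by metis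
    then show "vdisj (T x) (T y)" by (simp add: vdisj_def w_def)
  qed
qed

end
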